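(* Let $k$ be an infinite field and $n>0$ an integer. Then the action of $\mathrm{SO}_{2n+1}(k)$ on $\mathrm{Q}_{2n}(k)$ described in the context is transitive.
   Context: $\mathrm{Q}_{2n}$ is realized as the closed subscheme of $\mathbb{A}^{2n+2}_k$ given by $q_{2n+2}=0$ and $t_{2n+2}=1$, where $q_{2n+2}=\sum_{i=1}^{n+1}x_ix_{n+1+i}$, $t_{2n+2}(x)=x_{n+1}+x_{2n+2}=B(x,1)$ with $B$ the polar bilinear form of $q_{2n+2}$ and $1$ the vector with $x_{n+1}=x_{2n+2}=1$, other coordinates $0$ (this scheme is isomorphic to the hypersurface $\sum_{i=1}^nx_ix_{n+i}=x_{2n+1}(1-x_{2n+1})$ in $\mathbb{A}^{2n+1}_k$). The group $\mathrm{SO}_{2n+1}$ (kernel of the determinant on the orthogonal group scheme $\mathrm{O}_{2n+1}$ of $q_{2n+1}=\sum_{i=1}^nx_ix_{n+i}+x_{2n+1}^2$) acts on $\mathbb{A}^{2n+2}_k$ via the identification of $\mathrm{O}_{2n+1}$ with the stabilizer of $1$ in $\mathrm{GSO}_{2n+2}$ (the subgroup of similitudes of $q_{2n+2}$ generated by scalars and $\mathrm{SO}_{2n+2}$), using the embedding $(x_1,\dots,x_{2n+1})\mapsto(x_1,\dots,x_n,x_{2n+1},x_{n+1},\dots,x_{2n},x_{2n+1})$; this action preserves $q_{2n+2}$ and $t_{2n+2}$, hence $\mathrm{Q}_{2n}$. *)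

theory Defs
  imports "Jordan_Normal_Form.DL_Rank"
begin

text \<open>Vectors of k^(2n+2) are JNF vectors of dimension 2n+2, indexed 0..2n+1
  (paper coordinate x_i is entry i-1).\<close>

definition q2 :: "nat \<Rightarrow> 'a::field vec \<Rightarrow> 'a" where
  "q2 n x = (\<Sum>i<n+1. x $ i * x $ (n+1+i))"

definition t2 :: "nat \<Rightarrow> 'a::field vec \<Rightarrow> 'a" where
  "t2 n x = x $ n + x $ (2*n+1)"

definition one_vec :: "nat \<Rightarrow> 'a::field vec" where
  "one_vec n = vec (2*n+2) (\<lambda>i. if i = n \<or> i = 2*n+1 then 1 else 0)"

definition Q_points :: "nat \<Rightarrow> 'a::field vec set" where
  "Q_points n = {x \<in> carrier_vec (2*n+2). q2 n x = 0 \<and> t2 n x = 1}"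

definition O_even :: "nat \<Rightarrow> 'a::field mat set" where
  "O_even n = {M \<in> carrier_mat (2*n+2) (2*n+2). invertible_mat M \<and>
      (\<forall>x \<in> carrier_vec (2*n+2). q2 n (M *\<^sub>v x) = q2 n x)}"

text \<open>SO_{2n+2}(k): kernel of the Dickson invariant, computed characteristic-freely
  as rank(M - 1) mod 2 (equals the determinant condition in characteristic not 2).\<close>
definition SO_even :: "nat \<Rightarrow> 'a::field mat set" where
  "SO_even n = {M \<in> O_even n.
      even (vec_space.rank (2*n+2) (M - 1\<^sub>m (2*n+2)))}"

text \<open>Image of SO_{2n+1}(k) acting on k^(2n+2): the stabiliser of 1 in GSO_{2n+2}(k),
  which (as a fixed point of 1 forces multiplier 1) is the stabiliser of 1 in SO_{2n+2}(k).\<close>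
definition SO_odd_image :: "nat \<Rightarrow> 'a::field mat set" where
  "SO_odd_image n = {M \<in> SO_even n. M *\<^sub>v one_vec n = one_vec n}"

end

theory Submission
  imports Defs "Jordan_Normal_Form.DL_Rank_Submatrix" "HOL-Computational_Algebra.Polynomial"
begin


definition sw :: "nat \<Rightarrow> 'a::field vec \<Rightarrow> 'a vec" where
  "sw n v = vec (2*n+2) (\<lambda>i. if i < n+1 then v $ (i+(n+1)) else v $ (i-(n+1)))"

definition Bf :: "nat \<Rightarrow> 'a::field vec \<Rightarrow> 'a vec \<Rightarrow> 'a" where
  "Bf n x y = (\<Sum>i<n+1. x$i * y$(n+1+i) + x$(n+1+i) * y$i)"

lemma Bf_sym: "Bf n x y = Bf n y x"
  unfolding Bf_def by (rule sum.cong) (auto simp: mult.commute)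

lemma Bf_add: assumes "x \<in> carrier_vec (2*n+2)" "y \<in> carrier_vec (2*n+2)"
  shows "Bf n (x + y) z = Bf n x z + Bf n y z"
  unfolding Bf_def sum.distrib[symmetric]
proof (rule sum.cong)
  fix i assume "i \<in> {..<n+1}"
  then have "i < dim_vec y" "n+1+i < dim_vec y" using assms by auto
  then show "(x + y) $ i * z $ (n + 1 + i) + (x + y) $ (n + 1 + i) * z $ i =
         x $ i * z $ (n + 1 + i) + x $ (n + 1 + i) * z $ i + (y $ i * z $ (n + 1 + i) + y $ (n + 1 + i) * z $ i)"
    by (simp add: distrib_right)
qed simp

lemma Bf_smult: assumes "x \<in> carrier_vec (2*n+2)"
  shows "Bf n (c \<cdot>\<^sub>v x) z = c * Bf n x z"
  unfolding Bf_def sum_distrib_left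
proof (rule sum.cong)
  fix i assume "i \<in> {..<n+1}"
  then have "i < dim_vec x" "n+1+i < dim_vec x" using assms by auto
  then show "(c \<cdot>\<^sub>v x) $ i * z $ (n + 1 + i) + (c \<cdot>\<^sub>v x) $ (n + 1 + i) * z $ i =
         c * (x $ i * z $ (n + 1 + i) + x $ (n + 1 + i) * z $ i)"
    by (simp add: distrib_left mult.assoc)
qed simp

lemma q2_add: assumes "x \<in> carrier_vec (2*n+2)" "y \<in> carrier_vec (2*n+2)"
  shows "q2 n (x + y) = q2 n x + q2 n y + Bf n x y"
  unfolding Bf_def q2_def sum.distrib[symmetric]
proof (rule sum.cong)
  fix i assume "i \<in> {..<n+1}"
  then have "i < dim_vec y" "n+1+i < dim_vec y" using assms by auto
  then show "(x + y) $ i * (x + y) $ (n + 1 + i) =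
         x $ i * x $ (n + 1 + i) + y $ i * y $ (n + 1 + i) + (x $ i * y $ (n + 1 + i) + x $ (n + 1 + i) * y $ i)"
    by (simp add: algebra_simps)
qed simp

lemma q2_smult: assumes "x \<in> carrier_vec (2*n+2)"
  shows "q2 n (c \<cdot>\<^sub>v x) = c^2 * q2 n x"
  unfolding q2_def sum_distrib_left
proof (rule sum.cong)
  fix i assume "i \<in> {..<n+1}"
  then have "i < dim_vec x" "n+1+i < dim_vec x" using assms by auto
  then show "(c \<cdot>\<^sub>v x) $ i * (c \<cdot>\<^sub>v x) $ (n + 1 + i) = c^2 * (x $ i * x $ (n + 1 + i))"
    by (simp add: power2_eq_square)
qed simp

lemma Bf_self: "Bf n x x = 2 * q2 n x"
  unfolding Bf_def q2_def sum_distrib_left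
  by (rule sum.cong) (auto simp: mult.commute mult_2_right)

lemma sum_split2: "(\<Sum>j<((n::nat)+1)+(n+1). f j) = (\<Sum>i<n+1. f i + f (n+1+i))"
proof -
  have "(\<Sum>j\<in>{0..<n+1}. f j) + (\<Sum>j\<in>{n+1..<(n+1)+(n+1)}. f j) = (\<Sum>j\<in>{0..<(n+1)+(n+1)}. f j)"
    by (rule sum.atLeastLessThan_concat) auto
  moreover have "(\<Sum>j\<in>{n+1..<(n+1)+(n+1)}. f j) = (\<Sum>i\<in>{0..<n+1}. f (i+(n+1)))"
    using sum.shift_bounds_nat_ivl[of f 0 "n+1" "n+1"] by simp
  ultimately have "(\<Sum>j\<in>{0..<(n+1)+(n+1)}. f j) = (\<Sum>i\<in>{0..<n+1}. f i + f (i+(n+1)))"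
    by (simp only: sum.distrib)
  then show ?thesis by (simp only: lessThan_atLeast0 add.commute)
qed

lemma sw_dot: assumes "z \<in> carrier_vec (2*n+2)"
  shows "(\<Sum>j<2*n+2. (sw n a)$j * z$j) = Bf n z a"
proof -
  have "(\<Sum>j<2*n+2. (sw n a)$j * z$j) = (\<Sum>j<(n+1)+(n+1). (sw n a)$j * z$j)"
    by (simp add: mult_2)
  also have "\<dots> = Bf n z a" unfolding sum_split2 Bf_def sw_def
    by (auto simp: algebra_simps intro!: sum.cong)
  finally show ?thesis .
qed

lemma Bf_unit: assumes "k < 2*n+2"
  shows "Bf n (unit_vec (2*n+2) k) v = (sw n v) $ k"
proof -
  have "Bf n (unit_vec (2*n+2) k) v = (\<Sum>j<2*n+2. (sw n v)$j * (unit_vec (2*n+2) k)$j)"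
    by (rule sw_dot[symmetric]) simp
  also have "\<dots> = (\<Sum>j<2*n+2. if j = k then (sw n v)$k else 0)"
    by (rule sum.cong) (auto simp: unit_vec_def)
  also have "\<dots> = (sw n v) $ k" using assms by simp
  finally show ?thesis .
qed

lemma Bf_one: "Bf n x (one_vec n) = t2 n x"
proof -
  have "Bf n x (one_vec n) = (\<Sum>i<n+1. if i = n then x$n + x$(n+1+n) else 0)"
    unfolding Bf_def one_vec_def by (rule sum.cong) auto
  also have "\<dots> = x$n + x$(n+1+n)" by simp
  also have "n+1+n = 2*n+1" by simp
  finally show ?thesis unfolding t2_def .
qed

lemma one_carrier: "one_vec n \<in> carrier_vec (2*n+2)" unfolding one_vec_def by simp

lemma q_one: "q2 n (one_vec n) = (1::'a::field)"
proof -
  have "q2 n (one_vec n) = (\<Sum>i<n+1. if i = n then (1::'a) else 0)"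
    unfolding q2_def one_vec_def by (rule sum.cong) auto
  then show ?thesis by simp
qed


lemma Bf_smult_right: assumes "y \<in> carrier_vec (2*n+2)"
  shows "Bf n x (c \<cdot>\<^sub>v y) = c * Bf n x y"
  using Bf_smult[OF assms] Bf_sym by metis

lemma Bf_add_right: assumes "x \<in> carrier_vec (2*n+2)" "y \<in> carrier_vec (2*n+2)"
  shows "Bf n z (x + y) = Bf n z x + Bf n z y"
  using Bf_add[OF assms] Bf_sym by metis

definition rf :: "nat \<Rightarrow> 'a::field vec \<Rightarrow> 'a mat" where
  "rf n a = mat (2*n+2) (2*n+2) (\<lambda>(i,j). (if i = j then 1 else 0) - a$i * (sw n a)$j / q2 n a)"

lemma rf_carrier: "rf n a \<in> carrier_mat (2*n+2) (2*n+2)"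
  unfolding rf_def by simp

lemma rf_mult: assumes "a \<in> carrier_vec (2*n+2)" "z \<in> carrier_vec (2*n+2)"
  shows "rf n a *\<^sub>v z = z + (- (Bf n z a / q2 n a)) \<cdot>\<^sub>v a"
proof (rule eq_vecI)
  show "dim_vec (rf n a *\<^sub>v z) = dim_vec (z + (- (Bf n z a / q2 n a)) \<cdot>\<^sub>v a)"
    using assms by (simp add: rf_def)
  fix i assume "i < dim_vec (z + (- (Bf n z a / q2 n a)) \<cdot>\<^sub>v a)"
  then have i: "i < 2*n+2" using assms by simp
  have d1: "(\<Sum>j<2*n+2. (if i = j then z$j else 0)) = z$i"
    by (simp only: sum.delta' finite_lessThan) (use i in simp)
  have d2: "(\<Sum>j<2*n+2. (sw n a)$j * z$j) = Bf n z a"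
    using sw_dot[OF assms(2)] by simp
  have "(rf n a *\<^sub>v z) $ i = (\<Sum>j<2*n+2. ((if i=j then 1 else 0) - a$i * (sw n a)$j / q2 n a) * z$j)"
    using i assms by (simp add: rf_def scalar_prod_def lessThan_atLeast0)
  also have "\<dots> = (\<Sum>j<2*n+2. (if i = j then z$j else 0) - a$i / q2 n a * ((sw n a)$j * z$j))"
    by (rule sum.cong) (auto simp: algebra_simps)
  also have "\<dots> = (\<Sum>j<2*n+2. (if i = j then z$j else 0)) - a$i / q2 n a * (\<Sum>j<2*n+2. (sw n a)$j * z$j)"
    by (simp only: sum_subtractf sum_distrib_left)
  also have "\<dots> = z$i - a$i / q2 n a * Bf n z a"
    using d1 d2 by simp
  also have "\<dots> = (z + (- (Bf n z a / q2 n a)) \<cdot>\<^sub>v a) $ i"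
    using i assms by simp
  finally show "(rf n a *\<^sub>v z) $ i = (z + (- (Bf n z a / q2 n a)) \<cdot>\<^sub>v a) $ i" .
qed

lemma rf_q: assumes "a \<in> carrier_vec (2*n+2)" "z \<in> carrier_vec (2*n+2)" "q2 n a \<noteq> 0"
  shows "q2 n (rf n a *\<^sub>v z) = q2 n z"
proof -
  define c where "c = - (Bf n z a / q2 n a)"
  have "q2 n (rf n a *\<^sub>v z) = q2 n z + c^2 * q2 n a + c * Bf n z a"
    unfolding rf_mult[OF assms(1,2)] c_def[symmetric]
    using assms by (simp add: q2_add q2_smult Bf_smult_right)
  also have "\<dots> = q2 n z" unfolding c_def using assms(3) by (simp add: field_simps power2_eq_square)
  finally show ?thesis .
qed

lemma rf_Bf: assumes "a \<in> carrier_vec (2*n+2)" "z \<in> carrier_vec (2*n+2)"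
  shows "Bf n (rf n a *\<^sub>v z) w = Bf n z w - Bf n z a / q2 n a * Bf n a w"
  unfolding rf_mult[OF assms] using assms by (simp add: Bf_add Bf_smult)

lemma rf_invol: assumes "a \<in> carrier_vec (2*n+2)" "z \<in> carrier_vec (2*n+2)" "q2 n a \<noteq> 0"
  shows "rf n a *\<^sub>v (rf n a *\<^sub>v z) = z"
proof -
  have c: "rf n a *\<^sub>v z \<in> carrier_vec (2*n+2)" using rf_carrier assms by (metis mult_mat_vec_carrier)
  have "Bf n (rf n a *\<^sub>v z) a = - Bf n z a"
    unfolding rf_Bf[OF assms(1,2)] Bf_self using assms(3) by simp
  then have e: "rf n a *\<^sub>v (rf n a *\<^sub>v z) = (rf n a *\<^sub>v z) + (Bf n z a / q2 n a) \<cdot>\<^sub>v a"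
    unfolding rf_mult[OF assms(1) c] by simp
  show ?thesis unfolding e unfolding rf_mult[OF assms(1,2)]
    by (rule eq_vecI) (use assms in auto)
qed

lemma mat_entry_unit: assumes "(A :: 'a::field mat) \<in> carrier_mat nr nc" "i < nr" "j < nc"
  shows "A $$ (i,j) = (A *\<^sub>v unit_vec nc j) $ i"
  using assms by simp

lemma rf_sq: assumes "a \<in> carrier_vec (2*n+2)" "q2 n a \<noteq> 0"
  shows "rf n a * rf n a = 1\<^sub>m (2*n+2)"
proof (rule eq_matI)
  fix i j assume ij: "i < dim_row (1\<^sub>m (2*n+2) :: 'a mat)" "j < dim_col (1\<^sub>m (2*n+2) :: 'a mat)"
  have "(rf n a * rf n a) $$ (i,j) = ((rf n a * rf n a) *\<^sub>v unit_vec (2*n+2) j) $ i"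
    by (rule mat_entry_unit[of _ "2*n+2" "2*n+2"]) (use ij mult_carrier_mat[OF rf_carrier[of n a] rf_carrier[of n a]] in auto)
  also have "\<dots> = (rf n a *\<^sub>v (rf n a *\<^sub>v unit_vec (2*n+2) j)) $ i"
    using rf_carrier by (metis assoc_mult_mat_vec unit_vec_carrier)
  also have "\<dots> = unit_vec (2*n+2) j $ i" using rf_invol assms by (metis unit_vec_carrier)
  also have "\<dots> = 1\<^sub>m (2*n+2) $$ (i,j)" using ij by (simp add: unit_vec_def)
  finally show "(rf n a * rf n a) $$ (i,j) = 1\<^sub>m (2*n+2) $$ (i,j)" .
qed (simp_all add: rf_def)

lemma det1: assumes "(A :: 'a::comm_ring_1 mat) \<in> carrier_mat 1 1"
  shows "det A = A $$ (0,0)"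
proof -
  have "upper_triangular A" using assms unfolding upper_triangular_def by auto
  from det_upper_triangular[OF this assms] show ?thesis using assms by (simp add: diag_mat_def)
qed

lemma det2: assumes "(A :: 'a::comm_ring_1 mat) \<in> carrier_mat 2 2"
  shows "det A = A $$ (0,0) * A $$ (1,1) - A $$ (0,1) * A $$ (1,0)"
proof -
  have "det A = (\<Sum>j<2. A $$ (0,j) * cofactor A 0 j)"
    by (rule laplace_expansion_row[OF assms]) simp
  also have "\<dots> = A $$ (0,0) * cofactor A 0 0 + A $$ (0,1) * cofactor A 0 1"
    by (simp add: numeral_2_eq_2)
  also have "cofactor A 0 0 = A $$ (1,1)"
    unfolding cofactor_def using assms
    by (subst det1[of "mat_delete A 0 0"]) (auto simp: mat_delete_def)
  also have "cofactor A 0 1 = - A $$ (1,0)"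
    unfolding cofactor_def using assms
    by (subst det1[of "mat_delete A 0 1"]) (auto simp: mat_delete_def)
  finally show ?thesis by (simp add: algebra_simps)
qed

lemma pick0: "(a::nat) < b \<Longrightarrow> pick {a,b} 0 = a"
  by (auto intro!: Least_equality)

lemma pick1: assumes "(a::nat) < b" shows "pick {a,b} (Suc 0) = b"
proof -
  have "pick {a,b} (Suc 0) = (LEAST x. x \<in> {a,b} \<and> x > pick {a,b} 0)" by simp
  also have "\<dots> = (LEAST x. x \<in> {a,b} \<and> x > a)" using pick0[OF assms] by simp
  also have "\<dots> = b" using assms by (auto intro!: Least_equality)
  finally show ?thesis .
qed

lemma rank_ge2_ord:
  assumes A: "(A :: 'a::field mat) \<in> carrier_mat N N"
    and r: "r1 < r2" "r2 < N" and j: "j1 < j2" "j2 < N"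
    and d: "A $$ (r1,j1) * A $$ (r2,j2) - A $$ (r1,j2) * A $$ (r2,j1) \<noteq> 0"
  shows "2 \<le> vec_space.rank N A"
proof -
  have cr: "card {i. i < dim_row A \<and> i \<in> {r1,r2}} = 2"
  proof -
    have "{i. i < dim_row A \<and> i \<in> {r1,r2}} = {r1,r2}" using A r by auto
    then show ?thesis using r by simp
  qed
  have cj: "card {i. i < dim_col A \<and> i \<in> {j1,j2}} = 2"
  proof -
    have "{i. i < dim_col A \<and> i \<in> {j1,j2}} = {j1,j2}" using A j by auto
    then show ?thesis using j by simp
  qed
  let ?S = "submatrix A {r1,r2} {j1,j2}"
  have S: "?S \<in> carrier_mat 2 2" by (rule carrier_matI) (simp_all only: dim_submatrix cr cj)
  have e: "?S $$ (i,k) = A $$ (pick {r1,r2} i, pick {j1,j2} k)" if "i < 2" "k < 2" for i k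
    by (rule submatrix_index) (simp_all only: cr cj that)
  have e00: "?S $$ (0,0) = A $$ (r1,j1)" using e[of 0 0] pick0[OF r(1)] pick0[OF j(1)] by simp
  have e11: "?S $$ (1,1) = A $$ (r2,j2)" using e[of 1 1] pick1[OF r(1)] pick1[OF j(1)] by simp
  have e01: "?S $$ (0,1) = A $$ (r1,j2)" using e[of 0 1] pick0[OF r(1)] pick1[OF j(1)] by simp
  have e10: "?S $$ (1,0) = A $$ (r2,j1)" using e[of 1 0] pick1[OF r(1)] pick0[OF j(1)] by simp
  have "det ?S = A $$ (r1,j1) * A $$ (r2,j2) - A $$ (r1,j2) * A $$ (r2,j1)"
    unfolding det2[OF S] e00 e11 e01 e10 ..
  then have "det ?S \<noteq> 0" using d by simp
  from vec_space.rank_gt_minor[OF A this] have "card {k. k < N \<and> k \<in> {j1,j2}} \<le> vec_space.rank N A" .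
  moreover have "{k. k < N \<and> k \<in> {j1,j2}} = {j1,j2}" using j by auto
  ultimately show ?thesis using j by simp
qed


lemma ne_swap1: "(a::'a::field) * b - c * d \<noteq> 0 \<Longrightarrow> c * d - a * b \<noteq> 0" by simp
lemma ne_swap2: "(a::'a::field) * b - c * d \<noteq> 0 \<Longrightarrow> b * a - d * c \<noteq> 0" by (simp add: mult.commute)

lemma rank_ge2:
  assumes A: "(A :: 'a::field mat) \<in> carrier_mat N N"
    and r: "r1 \<noteq> r2" "r1 < N" "r2 < N" and j: "j1 \<noteq> j2" "j1 < N" "j2 < N"
    and d: "A $$ (r1,j1) * A $$ (r2,j2) - A $$ (r1,j2) * A $$ (r2,j1) \<noteq> 0"
  shows "2 \<le> vec_space.rank N A"
proof (cases "r1 < r2")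
  case True
  show ?thesis
  proof (cases "j1 < j2")
    case True
    show ?thesis by (rule rank_ge2_ord[OF A \<open>r1 < r2\<close> r(3) True j(3) d])
  next
    case False
    then have "j2 < j1" using j by simp
    show ?thesis by (rule rank_ge2_ord[OF A \<open>r1 < r2\<close> r(3) \<open>j2 < j1\<close> j(2)]) (rule ne_swap1[OF d])
  qed
next
  case False
  then have r21: "r2 < r1" using r by simp
  have d2: "A $$ (r2,j2) * A $$ (r1,j1) - A $$ (r2,j1) * A $$ (r1,j2) \<noteq> 0" by (rule ne_swap2[OF d])
  show ?thesis
  proof (cases "j1 < j2")
    case True
    show ?thesis by (rule rank_ge2_ord[OF A r21 r(2) True j(3)]) (rule ne_swap1[OF d2])
  next
    case False
    then have "j2 < j1" using j by simp
    show ?thesis by (rule rank_ge2_ord[OF A r21 r(2) \<open>j2 < j1\<close> j(2) d2])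
  qed
qed



definition sg :: "nat \<Rightarrow> nat \<Rightarrow> nat" where
  "sg n r = (if r < n+1 then r + (n+1) else r - (n+1))"

lemma sg_lt: "r < 2*n+2 \<Longrightarrow> sg n r < 2*n+2"
  unfolding sg_def by auto

lemma sw_sg: "r < 2*n+2 \<Longrightarrow> (sw n v) $ (sg n r) = v $ r"
  unfolding sg_def sw_def by auto

lemma sg_inj: "r1 \<noteq> r2 \<Longrightarrow> r1 < 2*n+2 \<Longrightarrow> r2 < 2*n+2 \<Longrightarrow> sg n r1 \<noteq> sg n r2"
  unfolding sg_def by auto

definition G1 :: "nat \<Rightarrow> 'a::field vec \<Rightarrow> nat \<Rightarrow> 'a" where
  "G1 n c j = - (Bf n (unit_vec (2*n+2) j) c / q2 n c)"

definition G2 :: "nat \<Rightarrow> 'a::field vec \<Rightarrow> 'a vec \<Rightarrow> nat \<Rightarrow> 'a" where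
  "G2 n a c j = - (Bf n (rf n c *\<^sub>v unit_vec (2*n+2) j) a / q2 n a)"

lemma M_entry:
  assumes a: "a \<in> carrier_vec (2*n+2)" and c: "c \<in> carrier_vec (2*n+2)"
    and r: "r < 2*n+2" and j: "j < 2*n+2"
  shows "(rf n a * rf n c - 1\<^sub>m (2*n+2)) $$ (r,j) = c$r * G1 n c j + a$r * G2 n a c j"
proof -
  let ?e = "unit_vec (2*n+2) j :: 'a vec"
  have e: "?e \<in> carrier_vec (2*n+2)" by simp
  have rc: "rf n c *\<^sub>v ?e \<in> carrier_vec (2*n+2)" using rf_carrier e by (metis mult_mat_vec_carrier)
  have P: "rf n a * rf n c \<in> carrier_mat (2*n+2) (2*n+2)"
    using mult_carrier_mat[OF rf_carrier[of n a] rf_carrier[of n c]] .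
  have "(rf n a * rf n c - 1\<^sub>m (2*n+2)) $$ (r,j) = (rf n a * rf n c) $$ (r,j) - 1\<^sub>m (2*n+2) $$ (r,j)"
    using P r j by simp
  also have "(rf n a * rf n c) $$ (r,j) = ((rf n a * rf n c) *\<^sub>v ?e) $ r"
    by (rule mat_entry_unit[OF P r j])
  also have "\<dots> = (rf n a *\<^sub>v (rf n c *\<^sub>v ?e)) $ r"
    using rf_carrier e by (metis assoc_mult_mat_vec)
  also have "rf n a *\<^sub>v (rf n c *\<^sub>v ?e) = (rf n c *\<^sub>v ?e) + G2 n a c j \<cdot>\<^sub>v a"
    unfolding G2_def by (rule rf_mult[OF a rc])
  also have "rf n c *\<^sub>v ?e = ?e + G1 n c j \<cdot>\<^sub>v c"
    unfolding G1_def by (rule rf_mult[OF c e])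
  finally show ?thesis using a c r j by (simp add: algebra_simps)
qed

lemma minor_id:
  fixes c1 c2 a1 a2 qa qc b :: "'a::field"
  assumes "qa \<noteq> 0" "qc \<noteq> 0"
  shows "(c1*(-(c1/qc)) + a1*(-((a1 - c1/qc*b)/qa))) * (c2*(-(c2/qc)) + a2*(-((a2 - c2/qc*b)/qa)))
       - (c1*(-(c2/qc)) + a1*(-((a2 - c2/qc*b)/qa))) * (c2*(-(c1/qc)) + a2*(-((a1 - c1/qc*b)/qa)))
       = (c1*a2 - a1*c2)^2 / (qa*qc)"
  using assms by (simp add: field_simps power2_eq_square)

lemma rank_M:
  assumes a: "a \<in> carrier_vec (2*n+2)" and c: "c \<in> carrier_vec (2*n+2)"
    and qa: "q2 n a \<noteq> 0" and qc: "q2 n c \<noteq> 0"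
    and r: "r1 < 2*n+2" "r2 < 2*n+2" and ind: "c$r1 * a$r2 - a$r1 * c$r2 \<noteq> 0"
  shows "vec_space.rank (2*n+2) (rf n a * rf n c - 1\<^sub>m (2*n+2)) = 2"
proof -
  let ?N = "2*n+2"
  let ?M = "rf n a * rf n c - 1\<^sub>m ?N"
  have P: "rf n a * rf n c \<in> carrier_mat ?N ?N"
    using mult_carrier_mat[OF rf_carrier[of n a] rf_carrier[of n c]] .
  have MC: "?M \<in> carrier_mat ?N ?N" by (rule minus_carrier_mat) simp
  define A1 where "A1 = mat ?N ?N (\<lambda>(r,j). c$r * G1 n c j)"
  define A2 where "A2 = mat ?N ?N (\<lambda>(r,j). a$r * G2 n a c j)"
  have A1: "A1 \<in> carrier_mat ?N ?N" and A2: "A2 \<in> carrier_mat ?N ?N" unfolding A1_def A2_def by auto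
  have eq: "?M = A1 + A2"
    by (rule eq_matI) (use P M_entry[OF a c] in \<open>auto simp: A1_def A2_def\<close>)
  have "vec_space.rank ?N A1 \<le> 1"
    by (rule vec_space.rank_le_1_product_entries[OF A1, of "\<lambda>r. c$r" "G1 n c"]) (auto simp: A1_def)
  moreover have "vec_space.rank ?N A2 \<le> 1"
    by (rule vec_space.rank_le_1_product_entries[OF A2, of "\<lambda>r. a$r" "G2 n a c"]) (auto simp: A2_def)
  moreover have "vec_space.rank ?N (A1 + A2) \<le> vec_space.rank ?N A1 + vec_space.rank ?N A2"
    by (rule vec_space.rank_subadditive[OF A1 A2])
  ultimately have le: "vec_space.rank ?N ?M \<le> 2" unfolding eq by simp
  have r12: "r1 \<noteq> r2" using ind by auto
  have g1: "G1 n c (sg n r) = - (c$r / q2 n c)" if "r < ?N" for r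
    unfolding G1_def Bf_unit[OF sg_lt[OF that]] sw_sg[OF that] ..
  have g2: "G2 n a c (sg n r) = - ((a$r - c$r / q2 n c * Bf n c a) / q2 n a)" if "r < ?N" for r
    unfolding G2_def rf_Bf[OF c unit_vec_carrier] Bf_unit[OF sg_lt[OF that]] sw_sg[OF that] by simp
  have ent: "?M $$ (r, sg n r') = c$r * (- (c$r' / q2 n c)) + a$r * (- ((a$r' - c$r' / q2 n c * Bf n c a) / q2 n a))"
    if "r < ?N" "r' < ?N" for r r'
    unfolding M_entry[OF a c that(1) sg_lt[OF that(2)]] g1[OF that(2)] g2[OF that(2)] ..
  have "?M $$ (r1, sg n r1) * ?M $$ (r2, sg n r2) - ?M $$ (r1, sg n r2) * ?M $$ (r2, sg n r1)
      = (c$r1 * a$r2 - a$r1 * c$r2)^2 / (q2 n a * q2 n c)"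
    unfolding ent[OF r(1) r(1)] ent[OF r(2) r(2)] ent[OF r(1) r(2)] ent[OF r(2) r(1)]
    by (rule minor_id[OF qa qc])
  also have "\<dots> \<noteq> 0" using ind qa qc by simp
  finally have "2 \<le> vec_space.rank ?N ?M"
    by (intro rank_ge2[OF MC r12 r(1) r(2) sg_inj[OF r12 r(1) r(2)] sg_lt[OF r(1)] sg_lt[OF r(2)]])
  with le show ?thesis by simp
qed



definition LP :: "nat \<Rightarrow> ('a::field vec \<Rightarrow> 'a) \<Rightarrow> bool" where
  "LP n f \<longleftrightarrow> (\<forall>p \<in> (carrier_vec (2*n+2) :: 'a vec set). \<forall>v \<in> (carrier_vec (2*n+2) :: 'a vec set). \<exists>P. \<forall>t. f (p + t \<cdot>\<^sub>v v) = poly P t)"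

lemma LP_q: "LP n (q2 n :: 'a::field vec \<Rightarrow> 'a)"
  unfolding LP_def
proof (intro ballI exI allI)
  fix p v :: "'a vec" and t :: 'a assume p: "p \<in> carrier_vec (2*n+2)" and v: "v \<in> carrier_vec (2*n+2)"
  show "q2 n (p + t \<cdot>\<^sub>v v) = poly [:q2 n p, Bf n p v, q2 n v:] t"
    using p v by (simp add: q2_add q2_smult Bf_smult_right algebra_simps power2_eq_square)
qed

lemma LP_B: "LP n (\<lambda>z. Bf n z (w :: 'a::field vec))"
  unfolding LP_def
proof (intro ballI exI allI)
  fix p v :: "'a vec" and t :: 'a assume p: "p \<in> carrier_vec (2*n+2)" and v: "v \<in> carrier_vec (2*n+2)"
  show "Bf n (p + t \<cdot>\<^sub>v v) w = poly [:Bf n p w, Bf n v w:] t"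
    using p v by (simp add: Bf_add Bf_smult algebra_simps)
qed

lemma LP_mult: assumes "LP n (f :: 'a::field vec \<Rightarrow> 'a)" "LP n g" shows "LP n (\<lambda>z. f z * g z)"
  unfolding LP_def
proof (intro ballI)
  fix p v :: "'a vec" assume p: "p \<in> carrier_vec (2*n+2)" and v: "v \<in> carrier_vec (2*n+2)"
  obtain P where P: "\<And>t. f (p + t \<cdot>\<^sub>v v) = poly P t" using assms(1) p v unfolding LP_def by blast
  obtain Q where Q: "\<And>t. g (p + t \<cdot>\<^sub>v v) = poly Q t" using assms(2) p v unfolding LP_def by blast
  show "\<exists>R. \<forall>t. f (p + t \<cdot>\<^sub>v v) * g (p + t \<cdot>\<^sub>v v) = poly R t"
    by (rule exI[of _ "P * Q"]) (simp add: P Q)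
qed

lemma LP_diff: assumes "LP n (f :: 'a::field vec \<Rightarrow> 'a)" "LP n g" shows "LP n (\<lambda>z. f z - g z)"
  unfolding LP_def
proof (intro ballI)
  fix p v :: "'a vec" assume p: "p \<in> carrier_vec (2*n+2)" and v: "v \<in> carrier_vec (2*n+2)"
  obtain P where P: "\<And>t. f (p + t \<cdot>\<^sub>v v) = poly P t" using assms(1) p v unfolding LP_def by blast
  obtain Q where Q: "\<And>t. g (p + t \<cdot>\<^sub>v v) = poly Q t" using assms(2) p v unfolding LP_def by blast
  show "\<exists>R. \<forall>t. f (p + t \<cdot>\<^sub>v v) - g (p + t \<cdot>\<^sub>v v) = poly R t"
    by (rule exI[of _ "P - Q"]) (simp add: P Q)
qed

lemma LP_cmult: assumes "LP n (f :: 'a::field vec \<Rightarrow> 'a)" shows "LP n (\<lambda>z. k * f z)"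
  unfolding LP_def
proof (intro ballI)
  fix p v :: "'a vec" assume p: "p \<in> carrier_vec (2*n+2)" and v: "v \<in> carrier_vec (2*n+2)"
  obtain P where P: "\<And>t. f (p + t \<cdot>\<^sub>v v) = poly P t" using assms(1) p v unfolding LP_def by blast
  show "\<exists>R. \<forall>t. k * f (p + t \<cdot>\<^sub>v v) = poly R t"
    by (rule exI[of _ "[:k:] * P"]) (simp add: P)
qed

lemma generic2:
  assumes inf: "infinite (UNIV :: 'a::field set)"
    and f: "LP n (f :: 'a vec \<Rightarrow> 'a)" and g: "LP n g"
    and p: "p \<in> carrier_vec (2*n+2)" and r: "r \<in> carrier_vec (2*n+2)"
    and p1: "Bf n p (one_vec n) = 0" and r1: "Bf n r (one_vec n) = 0"
    and fp: "f p \<noteq> 0" and gr: "g r \<noteq> 0"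
  shows "\<exists>z \<in> carrier_vec (2*n+2). Bf n z (one_vec n) = 0 \<and> f z \<noteq> 0 \<and> g z \<noteq> 0"
proof -
  define v where "v = r + (-1) \<cdot>\<^sub>v p"
  have v: "v \<in> carrier_vec (2*n+2)" unfolding v_def using p r by simp
  obtain P where P: "\<And>t. f (p + t \<cdot>\<^sub>v v) = poly P t" using f p v unfolding LP_def by blast
  obtain Q where Q: "\<And>t. g (p + t \<cdot>\<^sub>v v) = poly Q t" using g p v unfolding LP_def by blast
  have e0: "p + 0 \<cdot>\<^sub>v v = p" by (rule eq_vecI) (use p v in auto)
  have e1: "p + 1 \<cdot>\<^sub>v v = r" by (rule eq_vecI) (use p r in \<open>auto simp: v_def\<close>)
  have "poly P 0 \<noteq> 0" using P[of 0] fp e0 by simp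
  then have P0: "P \<noteq> 0" by auto
  have "poly Q 1 \<noteq> 0" using Q[of 1] gr e1 by simp
  then have Q0: "Q \<noteq> 0" by auto
  have "P * Q \<noteq> 0" using P0 Q0 by simp
  then have "finite {t. poly (P * Q) t = 0}" by (rule poly_roots_finite)
  then obtain t where t: "t \<notin> {t. poly (P * Q) t = 0}"
    using inf by (metis UNIV_I ex_new_if_finite)
  define z where "z = p + t \<cdot>\<^sub>v v"
  have z: "z \<in> carrier_vec (2*n+2)" unfolding z_def using p v by simp
  have "Bf n z (one_vec n) = Bf n p (one_vec n) + t * (Bf n r (one_vec n) - Bf n p (one_vec n))"
    unfolding z_def v_def using p r by (simp add: Bf_add Bf_smult algebra_simps)
  then have "Bf n z (one_vec n) = 0" using p1 r1 by simp
  moreover have "f z \<noteq> 0" "g z \<noteq> 0" using t P[of t] Q[of t] unfolding z_def by auto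
  ultimately show ?thesis using z by blast
qed



lemma q_unit: "q2 n (unit_vec (2*n+2) k) = (0::'a::field)"
  unfolding q2_def by (rule sum.neutral) (auto simp: unit_vec_def)

lemma Bf_lin3: assumes "x \<in> carrier_vec (2*n+2)" "y \<in> carrier_vec (2*n+2)" "z \<in> carrier_vec (2*n+2)"
  shows "Bf n (x + s \<cdot>\<^sub>v y + s' \<cdot>\<^sub>v z) w = Bf n x w + s * Bf n y w + s' * Bf n z w"
  using assms by (simp add: Bf_add Bf_smult)

lemma q_lin3: assumes "x \<in> carrier_vec (2*n+2)" "y \<in> carrier_vec (2*n+2)" "z \<in> carrier_vec (2*n+2)"
  shows "q2 n (x + s \<cdot>\<^sub>v y + s' \<cdot>\<^sub>v z) = q2 n x + s^2 * q2 n y + s'^2 * q2 n z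
     + s * Bf n x y + s' * Bf n x z + s * s' * Bf n y z"
  using assms by (simp add: q2_add q2_smult Bf_add Bf_add_right Bf_smult Bf_smult_right)

lemma proj:
  assumes n: "n > 0" and v: "v \<in> carrier_vec (2*n+2)" and v1: "Bf n v (one_vec n) = 0"
    and y: "y \<in> (Q_points n :: 'a::field vec set)"
    and a_def: "a = v + (- Bf n v y) \<cdot>\<^sub>v one_vec n + (2 * Bf n v y) \<cdot>\<^sub>v y"
  shows "a \<in> carrier_vec (2*n+2)" "Bf n a (one_vec n) = 0" "Bf n a y = 0"
    "q2 n a = q2 n v + (Bf n v y)^2"
proof -
  have yc: "y \<in> carrier_vec (2*n+2)" and qy: "q2 n y = 0" and ty: "t2 n y = 1"
    using y unfolding Q_points_def by auto
  have oc: "one_vec n \<in> carrier_vec (2*n+2)" by (rule one_carrier)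
  have y1: "Bf n y (one_vec n) = 1" using ty Bf_one by metis
  have oy: "Bf n (one_vec n) y = 1" using y1 Bf_sym by metis
  have oo: "Bf n (one_vec n) (one_vec n) = (2::'a)" using Bf_self[of n "one_vec n :: 'a vec"] q_one[where 'a='a] by simp
  have yy: "Bf n y y = 0" using Bf_self[of n y] qy by simp
  show ac: "a \<in> carrier_vec (2*n+2)" unfolding a_def by (intro add_carrier_vec) (insert v yc oc, simp_all)
  show "Bf n a (one_vec n) = 0" unfolding a_def Bf_lin3[OF v oc yc] v1 y1 oo
    by simp
  show "Bf n a y = 0" unfolding a_def Bf_lin3[OF v oc yc] oy yy
    by simp
  have v1': "Bf n v (one_vec n) = 0" by (rule v1)
  show "q2 n a = q2 n v + (Bf n v y)^2" unfolding a_def q_lin3[OF v oc yc] oy qy v1' q_one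
    by (simp add: algebra_simps power2_eq_square)
qed


lemma Bf_unit_sg: "k < 2*n+2 \<Longrightarrow> Bf n (unit_vec (2*n+2) k) v = v $ (sg n k)"
  unfolding Bf_unit sw_def sg_def by simp

lemma sg_sg: "k < 2*n+2 \<Longrightarrow> sg n (sg n k) = k"
  unfolding sg_def by auto

lemma one_idx: "k < 2*n+2 \<Longrightarrow> (one_vec n :: 'a::field vec) $ k = (if k = n \<or> k = 2*n+1 then 1 else 0)"
  unfolding one_vec_def by simp

lemma u_facts:
  assumes n: "n > 0"
  defines "u \<equiv> unit_vec (2*n+2) 0 + unit_vec (2*n+2) (n+1) :: 'a::field vec"
  shows "u \<in> carrier_vec (2*n+2)" "q2 n u = 1" "Bf n u (one_vec n) = 0"
    "Bf n u y = y $ (n+1) + y $ 0"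
proof -
  have e0: "unit_vec (2*n+2) 0 \<in> (carrier_vec (2*n+2) :: 'a vec set)" by simp
  have e1: "unit_vec (2*n+2) (n+1) \<in> (carrier_vec (2*n+2) :: 'a vec set)" by simp
  have l0: "0 < 2*n+2" and l1: "n+1 < 2*n+2" using n by auto
  have s0: "sg n 0 = n+1" and s1: "sg n (n+1) = 0" unfolding sg_def by auto
  show "u \<in> carrier_vec (2*n+2)" unfolding u_def by simp
  show "q2 n u = 1" unfolding u_def q2_add[OF e0 e1] q_unit Bf_unit_sg[OF l0] s0
    using l1 by simp
  show "Bf n u (one_vec n) = 0" unfolding u_def Bf_add[OF e0 e1] Bf_unit_sg[OF l0] Bf_unit_sg[OF l1] s0 s1
    using n l0 l1 by (simp add: one_idx)
  show "Bf n u y = y $ (n+1) + y $ 0" unfolding u_def Bf_add[OF e0 e1] Bf_unit_sg[OF l0] Bf_unit_sg[OF l1] s0 s1 ..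
qed

lemma pt_q: assumes "n > 0"
  shows "\<exists>p \<in> carrier_vec (2*n+2). Bf n p (one_vec n) = 0 \<and> q2 n p \<noteq> (0::'a::field)"
  using u_facts[OF assms, where 'a='a] by (metis one_neq_zero)

lemma pt_perp: assumes n: "n > 0" and y: "y \<in> (Q_points n :: 'a::field vec set)"
  shows "\<exists>p \<in> carrier_vec (2*n+2). Bf n p (one_vec n) = 0 \<and> Bf n p y = 0 \<and> q2 n p \<noteq> 0"
proof -
  have l0: "0 < 2*n+2" and l1: "n+1 < 2*n+2" using n by auto
  have s0: "sg n 0 = n+1" and s1: "sg n (n+1) = 0" unfolding sg_def by auto
  obtain v where v: "v \<in> carrier_vec (2*n+2)" "Bf n v (one_vec n) = 0" "q2 n v + (Bf n v y)^2 \<noteq> 0"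
  proof (cases "y $ (n+1) \<noteq> 0")
    case True
    show ?thesis
    proof (rule that[of "unit_vec (2*n+2) 0"])
      show "Bf n (unit_vec (2*n+2) 0) (one_vec n) = 0" unfolding Bf_unit_sg[OF l0] s0 using n l1 by (simp add: one_idx)
      show "q2 n (unit_vec (2*n+2) 0) + (Bf n (unit_vec (2*n+2) 0) y)^2 \<noteq> 0"
        unfolding q_unit Bf_unit_sg[OF l0] s0 using True by simp
    qed simp
  next
    case False
    show ?thesis
    proof (cases "y $ 0 \<noteq> 0")
      case True
      show ?thesis
      proof (rule that[of "unit_vec (2*n+2) (n+1)"])
        show "Bf n (unit_vec (2*n+2) (n+1)) (one_vec n) = 0" unfolding Bf_unit_sg[OF l1] s1 using n l0 by (simp add: one_idx)
        show "q2 n (unit_vec (2*n+2) (n+1)) + (Bf n (unit_vec (2*n+2) (n+1)) y)^2 \<noteq> 0"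
          unfolding q_unit Bf_unit_sg[OF l1] s1 using True by simp
      qed simp
    next
      case False2: False
      show ?thesis
        by (rule that[of "unit_vec (2*n+2) 0 + unit_vec (2*n+2) (n+1)"])
          (use u_facts[OF n, where 'a='a] False False2 in simp_all)
    qed
  qed
  define a where "a = v + (- Bf n v y) \<cdot>\<^sub>v one_vec n + (2 * Bf n v y) \<cdot>\<^sub>v y"
  note P = proj[OF n v(1) v(2) y a_def]
  show ?thesis using P v(3) by auto
qed

lemma pt_B: assumes n: "n > 0" and x: "x \<in> (Q_points n :: 'a::field vec set)"
  shows "\<exists>p \<in> carrier_vec (2*n+2). Bf n p (one_vec n) = 0 \<and> Bf n p x \<noteq> 0"
proof -
  have xc: "x \<in> carrier_vec (2*n+2)" and qx: "q2 n x = 0" and tx: "t2 n x = 1"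
    using x unfolding Q_points_def by auto
  show ?thesis
  proof (cases "\<exists>j < 2*n+2. j \<noteq> n \<and> j \<noteq> 2*n+1 \<and> x $ j \<noteq> 0")
    case True
    then obtain j where j: "j < 2*n+2" "j \<noteq> n" "j \<noteq> 2*n+1" "x $ j \<noteq> 0" by blast
    have l: "sg n j < 2*n+2" by (rule sg_lt[OF j(1)])
    show ?thesis
    proof (rule bexI[of _ "unit_vec (2*n+2) (sg n j)"], intro conjI)
      show "Bf n (unit_vec (2*n+2) (sg n j)) (one_vec n) = 0"
        unfolding Bf_unit_sg[OF l] sg_sg[OF j(1)] using j by (simp add: one_idx)
      show "Bf n (unit_vec (2*n+2) (sg n j)) x \<noteq> 0"
        unfolding Bf_unit_sg[OF l] sg_sg[OF j(1)] using j by simp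
    qed simp
  next
    case False
    then have z: "\<And>j. j < 2*n+2 \<Longrightarrow> j \<noteq> n \<Longrightarrow> j \<noteq> 2*n+1 \<Longrightarrow> x $ j = 0" by blast
    have "q2 n x = (\<Sum>i<n. x$i * x$(n+1+i)) + x$n * x$(n+1+n)"
      unfolding q2_def by simp
    also have "(\<Sum>i<n. x$i * x$(n+1+i)) = 0"
      by (rule sum.neutral) (use z in auto)
    also have "n+1+n = 2*n+1" by simp
    finally have qx2: "x$n * x$(2*n+1) = 0" using qx by simp
    have tx2: "x$n + x$(2*n+1) = 1" using tx unfolding t2_def .
    have ne: "x$(2*n+1) - x$n \<noteq> 0"
    proof
      assume "x$(2*n+1) - x$n = 0"
      then have "x$(2*n+1) = x$n" by simp
      then have "x$n * x$n = 0" "x$n + x$n = 1" using qx2 tx2 by auto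
      then show False by simp
    qed
    have ln: "n < 2*n+2" and lm: "2*n+1 < 2*n+2" by auto
    have sn: "sg n n = 2*n+1" and sm: "sg n (2*n+1) = n" unfolding sg_def by auto
    have e0: "unit_vec (2*n+2) n \<in> (carrier_vec (2*n+2) :: 'a vec set)" by simp
    have e1: "(-1) \<cdot>\<^sub>v unit_vec (2*n+2) (2*n+1) \<in> (carrier_vec (2*n+2) :: 'a vec set)" by simp
    have e1': "unit_vec (2*n+2) (2*n+1) \<in> (carrier_vec (2*n+2) :: 'a vec set)" by simp
    show ?thesis
    proof (rule bexI[of _ "unit_vec (2*n+2) n + (-1) \<cdot>\<^sub>v unit_vec (2*n+2) (2*n+1)"], intro conjI)
      show "Bf n (unit_vec (2*n+2) n + (-1) \<cdot>\<^sub>v unit_vec (2*n+2) (2*n+1)) (one_vec n :: 'a vec) = 0"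
        unfolding Bf_add[OF e0 e1] Bf_smult[OF e1'] Bf_unit_sg[OF ln] Bf_unit_sg[OF lm] sn sm
        by (simp add: one_idx)
      show "Bf n (unit_vec (2*n+2) n + (-1) \<cdot>\<^sub>v unit_vec (2*n+2) (2*n+1)) x \<noteq> 0"
        unfolding Bf_add[OF e0 e1] Bf_smult[OF e1'] Bf_unit_sg[OF ln] Bf_unit_sg[OF lm] sn sm
        using ne by simp
    qed simp
  qed
qed



lemma rf_fix: assumes "a \<in> carrier_vec (2*n+2)" "z \<in> carrier_vec (2*n+2)" "Bf n z a = 0"
  shows "rf n a *\<^sub>v z = z"
  unfolding rf_mult[OF assms(1,2)] assms(3) by (rule eq_vecI) (use assms in auto)

lemma rf_scale: assumes a: "a \<in> carrier_vec (2*n+2)" and z: "z \<in> carrier_vec (2*n+2)"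
  and l: "l \<noteq> 0" and qa: "q2 n a \<noteq> 0"
  shows "rf n (l \<cdot>\<^sub>v a) *\<^sub>v z = rf n a *\<^sub>v z"
proof -
  have la: "l \<cdot>\<^sub>v a \<in> carrier_vec (2*n+2)" using a by simp
  have "Bf n z (l \<cdot>\<^sub>v a) / q2 n (l \<cdot>\<^sub>v a) = (Bf n z a / q2 n a) / l"
    unfolding Bf_smult_right[OF a] q2_smult[OF a] using l qa by (simp add: field_simps power2_eq_square)
  then show ?thesis unfolding rf_mult[OF la z] rf_mult[OF a z]
    by (intro eq_vecI) (use a z l in auto)
qed

lemma q_zero_if: assumes "\<forall>i < 2*n+2. a $ i = 0" shows "q2 n a = 0"
  unfolding q2_def by (rule sum.neutral) (use assms in auto)

lemma indep:
  assumes a: "a \<in> carrier_vec (2*n+2)" and c: "c \<in> carrier_vec (2*n+2)"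
    and qa: "q2 n a \<noteq> 0" and qc: "q2 n c \<noteq> 0"
    and dep: "\<forall>r1 < 2*n+2. \<forall>r2 < 2*n+2. c$r1 * a$r2 - a$r1 * c$r2 = 0"
    and z: "z \<in> carrier_vec (2*n+2)"
  shows "rf n c *\<^sub>v z = rf n a *\<^sub>v z"
proof -
  obtain i where i: "i < 2*n+2" "a $ i \<noteq> 0" using q_zero_if qa by blast
  define l where "l = c$i / a$i"
  have ceq: "c = l \<cdot>\<^sub>v a"
  proof (rule eq_vecI)
    fix r assume "r < dim_vec (l \<cdot>\<^sub>v a)"
    then have r: "r < 2*n+2" using a by simp
    have "c$i * a$r - a$i * c$r = 0" using dep i r by blast
    then show "c $ r = (l \<cdot>\<^sub>v a) $ r" using r a i unfolding l_def by (simp add: field_simps)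
  qed (use a c in simp)
  have "l \<noteq> 0"
  proof
    assume "l = 0"
    then have "c = 0 \<cdot>\<^sub>v a" using ceq by simp
    then have "q2 n c = 0" using q2_smult[OF a, of 0] by simp
    then show False using qc by simp
  qed
  then show ?thesis unfolding ceq by (rule rf_scale[OF a z _ qa])
qed

theorem proposition2p10:
  fixes n :: nat
  assumes "infinite (UNIV :: 'a::field set)"
    and "n > 0"
    and "x \<in> (Q_points n :: 'a vec set)" and "y \<in> Q_points n"
  shows "\<exists>M \<in> SO_odd_image n. M *\<^sub>v x = y"
proof -
  note inf = assms(1) and n = assms(2) and x = assms(3) and y = assms(4)
  have xc: "x \<in> carrier_vec (2*n+2)" and qx: "q2 n x = 0" and tx: "t2 n x = 1"
    using x unfolding Q_points_def by auto
  have yc: "y \<in> carrier_vec (2*n+2)" and qy: "q2 n y = 0" and ty: "t2 n y = 1"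
    using y unfolding Q_points_def by auto
  have oc: "one_vec n \<in> carrier_vec (2*n+2)" by (rule one_carrier)
  have x1: "Bf n x (one_vec n) = 1" using tx Bf_one by metis
  have y1: "Bf n y (one_vec n) = 1" using ty Bf_one by metis
  have xx: "Bf n x x = 0" using Bf_self[of n x] qx by simp
  show ?thesis
  proof (cases "x = y")
    case True
    let ?I = "1\<^sub>m (2*n+2) :: 'a mat"
    have "?I \<in> SO_odd_image n"
      unfolding SO_odd_image_def SO_even_def O_even_def
    proof (intro CollectI conjI ballI)
      show "?I \<in> carrier_mat (2*n+2) (2*n+2)" by simp
      show "invertible_mat ?I" unfolding invertible_mat_def inverts_mat_def square_mat.simps
        by (intro conjI exI[of _ ?I]) auto
      fix z :: "'a vec" assume "z \<in> carrier_vec (2*n+2)"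
      then show "q2 n (?I *\<^sub>v z) = q2 n z" by simp
    next
      have z0: "?I - ?I = 0\<^sub>m (2*n+2) (2*n+2)" by simp
      show "even (vec_space.rank (2*n+2) (?I - ?I))" unfolding z0 vec_space.rank_0I by simp
    next
      show "?I *\<^sub>v one_vec n = one_vec n" by (rule one_mult_mat_vec[OF oc])
    qed
    then show ?thesis using True xc by (intro bexI[of _ ?I]) auto
  next
    case False
    define \<beta> where "\<beta> = Bf n x y"
    obtain a where a: "a \<in> carrier_vec (2*n+2)" and a1: "Bf n a (one_vec n) = 0" and qa: "q2 n a \<noteq> 0"
      and Ga: "Bf n a y * Bf n a x - \<beta> * q2 n a \<noteq> 0"
    proof (cases "\<beta> = 0")
      case True
      obtain p1 where p1: "p1 \<in> carrier_vec (2*n+2)" "Bf n p1 (one_vec n) = 0" "Bf n p1 x \<noteq> 0"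
        using pt_B[OF n x] by blast
      obtain p2 where p2: "p2 \<in> carrier_vec (2*n+2)" "Bf n p2 (one_vec n) = 0" "Bf n p2 y \<noteq> 0"
        using pt_B[OF n y] by blast
      obtain z1 where z1: "z1 \<in> carrier_vec (2*n+2)" "Bf n z1 (one_vec n) = 0" "Bf n z1 y \<noteq> 0" "Bf n z1 x \<noteq> 0"
        using generic2[OF inf LP_B LP_B p2(1) p1(1) p2(2) p1(2) p2(3) p1(3)] by blast
      obtain p0 where p0: "p0 \<in> carrier_vec (2*n+2)" "Bf n p0 (one_vec n) = 0" "q2 n p0 \<noteq> (0::'a)"
        using pt_q[OF n] by blast
      have "z1 \<in> carrier_vec (2*n+2)" "Bf n z1 y * Bf n z1 x \<noteq> 0" using z1 by auto
      from generic2[OF inf LP_q LP_mult[OF LP_B LP_B] p0(1) z1(1) p0(2) z1(2) p0(3) this(2)]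
      obtain z where "z \<in> carrier_vec (2*n+2)" "Bf n z (one_vec n) = 0" "q2 n z \<noteq> 0" "Bf n z y * Bf n z x \<noteq> 0"
        by blast
      then show ?thesis using that True by simp
    next
      case False
      obtain p where p: "p \<in> carrier_vec (2*n+2)" "Bf n p (one_vec n) = 0" "Bf n p y = 0" "q2 n p \<noteq> 0"
        using pt_perp[OF n y] by blast
      show ?thesis by (rule that[OF p(1) p(2) p(4)]) (use p(3) p(4) False in simp)
    qed
    define y' where "y' = rf n a *\<^sub>v y"
    have y'c: "y' \<in> carrier_vec (2*n+2)" unfolding y'_def using rf_carrier yc by (metis mult_mat_vec_carrier)
    have qy': "q2 n y' = 0" unfolding y'_def rf_q[OF a yc qa] qy ..
    have y'1: "Bf n y' (one_vec n) = 1" unfolding y'_def rf_Bf[OF a yc] y1 a1 by simp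
    have xy': "Bf n x y' = \<beta> - Bf n y a / q2 n a * Bf n a x"
    proof -
      have "Bf n x y' = Bf n y' x" by (rule Bf_sym)
      also have "\<dots> = Bf n y x - Bf n y a / q2 n a * Bf n a x" unfolding y'_def by (rule rf_Bf[OF a yc])
      also have "Bf n y x = \<beta>" unfolding \<beta>_def by (rule Bf_sym)
      finally show ?thesis .
    qed
    define c where "c = x + (-1) \<cdot>\<^sub>v y'"
    have cc: "c \<in> carrier_vec (2*n+2)" unfolding c_def using xc y'c by simp
    have qc_eq: "q2 n c = - Bf n x y'"
      unfolding c_def q2_add[OF xc smult_carrier_vec[THEN iffD2, OF y'c]] q2_smult[OF y'c]
        Bf_smult_right[OF y'c] qx qy' by simp
    have qc: "q2 n c \<noteq> 0"
    proof
      assume "q2 n c = 0"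
      then have "\<beta> = Bf n y a / q2 n a * Bf n a x" using qc_eq xy' by simp
      then have "\<beta> * q2 n a = Bf n y a * Bf n a x" using qa by simp
      then show False using Ga Bf_sym[of n y a] by (simp add: mult.commute)
    qed
    have c1: "Bf n c (one_vec n) = 0"
      unfolding c_def Bf_add[OF xc smult_carrier_vec[THEN iffD2, OF y'c]] Bf_smult[OF y'c] x1 y'1 by simp
    have xc_eq0: "Bf n x c = - Bf n x y'"
      unfolding c_def Bf_add_right[OF xc smult_carrier_vec[THEN iffD2, OF y'c]] Bf_smult_right[OF y'c] xx
      by simp
    have xc_eq: "Bf n x c = q2 n c" using xc_eq0 qc_eq by simp
    have rcx: "rf n c *\<^sub>v x = y'"
      unfolding rf_mult[OF cc xc] xc_eq using qc
      by (intro eq_vecI) (use xc y'c in \<open>auto simp: c_def\<close>)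
    let ?M = "rf n a * rf n c"
    have Mc: "?M \<in> carrier_mat (2*n+2) (2*n+2)" using mult_carrier_mat[OF rf_carrier[of n a] rf_carrier[of n c]] .
    have Mv: "?M *\<^sub>v z = rf n a *\<^sub>v (rf n c *\<^sub>v z)" if "z \<in> carrier_vec (2*n+2)" for z
      using rf_carrier that by (metis assoc_mult_mat_vec)
    have Mx: "?M *\<^sub>v x = y" unfolding Mv[OF xc] rcx y'_def by (rule rf_invol[OF a yc qa])
    have M1: "?M *\<^sub>v one_vec n = one_vec n"
      unfolding Mv[OF oc] rf_fix[OF cc oc, unfolded Bf_sym[of n "one_vec n" c], OF c1]
      using rf_fix[OF a oc, unfolded Bf_sym[of n "one_vec n" a], OF a1] .
    have Mq: "q2 n (?M *\<^sub>v z) = q2 n z" if "z \<in> carrier_vec (2*n+2)" for z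
    proof -
      have cz: "rf n c *\<^sub>v z \<in> carrier_vec (2*n+2)" using rf_carrier that by (metis mult_mat_vec_carrier)
      show ?thesis unfolding Mv[OF that] rf_q[OF a cz qa] rf_q[OF cc that qc] ..
    qed
    have Minv: "invertible_mat ?M"
    proof -
      have ra: "rf n a \<in> carrier_mat (2*n+2) (2*n+2)" and rc: "rf n c \<in> carrier_mat (2*n+2) (2*n+2)"
        by (rule rf_carrier)+
      have ca: "rf n c * rf n a \<in> carrier_mat (2*n+2) (2*n+2)" using mult_carrier_mat[OF rc ra] .
      have i1: "?M * (rf n c * rf n a) = 1\<^sub>m (2*n+2)"
      proof -
        have "?M * (rf n c * rf n a) = rf n a * (rf n c * (rf n c * rf n a))" by (rule assoc_mult_mat[OF ra rc ca])
        also have "rf n c * (rf n c * rf n a) = (rf n c * rf n c) * rf n a" by (rule assoc_mult_mat[OF rc rc ra, symmetric])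
        also have "\<dots> = rf n a" unfolding rf_sq[OF cc qc] using ra by simp
        also have "rf n a * rf n a = 1\<^sub>m (2*n+2)" by (rule rf_sq[OF a qa])
        finally show ?thesis .
      qed
      have i2: "(rf n c * rf n a) * ?M = 1\<^sub>m (2*n+2)"
      proof -
        have "(rf n c * rf n a) * ?M = rf n c * (rf n a * (rf n a * rf n c))" by (rule assoc_mult_mat[OF rc ra Mc])
        also have "rf n a * (rf n a * rf n c) = (rf n a * rf n a) * rf n c" by (rule assoc_mult_mat[OF ra ra rc, symmetric])
        also have "\<dots> = rf n c" unfolding rf_sq[OF a qa] using rc by simp
        also have "rf n c * rf n c = 1\<^sub>m (2*n+2)" by (rule rf_sq[OF cc qc])
        finally show ?thesis .
      qed
      show ?thesis unfolding invertible_mat_def inverts_mat_def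
        using Mc i1 i2 ra rc by (intro conjI exI[of _ "rf n c * rf n a"]) auto
    qed
    obtain r1 r2 where r: "r1 < 2*n+2" "r2 < 2*n+2" and ind: "c$r1 * a$r2 - a$r1 * c$r2 \<noteq> 0"
    proof -
      have "\<not> (\<forall>r1 < 2*n+2. \<forall>r2 < 2*n+2. c$r1 * a$r2 - a$r1 * c$r2 = 0)"
      proof
        assume dep: "\<forall>r1 < 2*n+2. \<forall>r2 < 2*n+2. c$r1 * a$r2 - a$r1 * c$r2 = 0"
        have "?M *\<^sub>v x = rf n a *\<^sub>v (rf n a *\<^sub>v x)" unfolding Mv[OF xc] indep[OF a cc qa qc dep xc] ..
        also have "\<dots> = x" by (rule rf_invol[OF a xc qa])
        finally show False using Mx False by simp
      qed
      then show ?thesis using that by blast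
    qed
    have rank: "vec_space.rank (2*n+2) (?M - 1\<^sub>m (2*n+2)) = 2"
      by (rule rank_M[OF a cc qa qc r ind])
    have "?M \<in> SO_odd_image n"
      unfolding SO_odd_image_def SO_even_def O_even_def
      using Mc Minv Mq rank M1 by auto
    then show ?thesis using Mx by blast
  qed
qed

end
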